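(* Let $H\Gamma=(C,\{\mathcal W,\mathcal X,\mathcal Y,\mathcal Z\},G_{zx},G_{wy})$ be a Lagrangian hypercube diagram and $L$ the embedded Legendrian torus obtained as the lift of the Lagrangian torus it determines. Then the Maslov number of $L$ equals $2\gcd(w(G_{zx}),w(G_{wy}))$ (a non-negative integer), where $w(G)=\frac14(\#\text{counterclockwise corners of }G-\#\text{clockwise corners of }G)$.
   Context: Grid conventions. In a plane with coordinates $(a,b)$ (below $(a,b)=(w,y)$ or $(a,b)=(z,x)$), an immersed grid diagram of size $n$ is an $n\times n$ grid of unit cells in $[0,n]^2$ with two kinds of markings at centers of cells, each row and each column containing exactly one marking of each kind; joining each marking of the first kind to the marking of the second kind in its row by an $a$-parallel segment, and each marking of the second kind to the marking of the first kind in its column by a $b$-parallel segment, gives an oriented connected closed piecewise-linear curve, with no crossing information, viewed as an immersion $\gamma:\mathbb{R}/2\pi\mathbb{Z}\to\mathbb{R}^2$, $\theta\mapsto(a(\theta),b(\theta))$. It is a Lagrangian grid diagram if (1) $\int_0^{2\pi}b\,a'\,d\theta=0$ and (2) $\int_{\theta_0}^{\theta_1}b\,a'\,d\theta\neq0$ whenever $\theta_0\neq\theta_1$ and $\gamma(\theta_0)=\gamma(\theta_1)$. For a crossing $c=\gamma(\theta_0)=\gamma(\theta_1)$ put $|\Delta t(c)|=|\int_{\theta_0}^{\theta_1}b\,a'\,d\theta|$. The corners are the markings; a corner is counterclockwise (resp. clockwise) if the curve turns left (resp. right) there relative to the orientation of the $(a,b)$-plane. Hypercube diagrams. Let $C=[0,n]^4$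 with coordinates $(w,x,y,z)$. A flat is a product in which two coordinates range over $[0,n]$ and the other two over unit intervals $[k,k+1]$, named by its two full coordinates; a cube is a product in which three coordinates range over $[0,n]$ and one over a unit interval. Markings are points with coordinates in $\mathbb{Z}+\frac12$ labelled $W,X,Y,Z$. Marking conditions: each cube contains exactly one marking of each label; each cube contains exactly two flats containing exactly three markings; in each such flat the three markings form a right angle with rays parallel to coordinate axes; its vertex is $W$ iff the flat is a $zw$-flat, $X$ iff a $wx$-flat, $Y$ iff an $xy$-flat, $Z$ iff a $yz$-flat. Join each $W$ to an $X$ by a $w$-parallel segment, each $X$ to a $Y$ by an $x$-parallel segment, each $Y$ to a $Z$ by a $y$-parallel segment and each $Z$ to a $W$ by a $z$-parallel segment; the projections of this curve to the $(w,y)$- and $(z,x)$-planes are immersed grid diagrams $G_{wy}$ ($(a,b)=(w,y)$) and $G_{zx}$ ($(a,b)=(z,x)$). $H\Gamma$ is a Lagrangian hypercube diagram if the marking conditions hold, $G_{wy},G_{zx}$ are Lagrangian grid diagrams, and $|\Delta t(c)|\neq|\Delta t(c')|$ for all crossings $c$ of $G_{zx}$ and $c'$ of $G_{wy}$. Torus and lift. With $G_{zx}$ parametrized by $s\mapsto(z(s),x(s))$ and $G_{wy}$ by $u\mapsto(w(u),y(u))$ (corners slightly smoothed preserving (1),(2)), the torus is $i(s,u)=(w(u),x(s),y(u),z(s))$, Lagrangian for $\omega=dw\wedge dy+dz\wedge dx$. In $\mathbb{R}^5$ with coordinates $(w,x,y,z,t)$ and contact form $dt-y\,dw-x\,dz$,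 the lift is $L=\{(i(p),t(p))\}$, $t(p)=t_0+\int_\gamma(y\,dw+x\,dz)$ along a path from a base point to $p$. The Maslov index of a loop is the Maslov index of the loop of (unoriented) Lagrangian tangent planes of $i$ along it. The Maslov number of $L$ is the smallest positive integer that is the Maslov index of some loop in $L$, and $0$ if every loop has Maslov index $0$; here $\gcd(0,0)=0$. *)

theory Defs
  imports "HOL-Complex_Analysis.Complex_Analysis"
begin

text \<open>A planar curve is c :: real => real * real, theta |-> (a(theta), b(theta)),
  2pi-periodic. The integral of b a' over [t0,t1].\<close>

definition dt_int :: "(real \<Rightarrow> real \<times> real) \<Rightarrow> real \<Rightarrow> real \<Rightarrow> real" where
  "dt_int c t0 t1 = integral {t0..t1} (\<lambda>\<theta>. snd (c \<theta>) * vector_derivative (\<lambda>t. fst (c t)) (at \<theta>))"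

definition lag_cond1 :: "(real \<Rightarrow> real \<times> real) \<Rightarrow> bool" where
  "lag_cond1 c \<longleftrightarrow> dt_int c 0 (2*pi) = 0"

definition crossings :: "(real \<Rightarrow> real \<times> real) \<Rightarrow> (real \<times> real) set" where
  "crossings c = {(t0, t1). 0 \<le> t0 \<and> t0 < t1 \<and> t1 < 2*pi \<and> c t0 = c t1}"

definition lag_cond2 :: "(real \<Rightarrow> real \<times> real) \<Rightarrow> bool" where
  "lag_cond2 c \<longleftrightarrow> (\<forall>(t0, t1) \<in> crossings c. dt_int c t0 t1 \<noteq> 0)"

text \<open>A grid diagram of size n is given by the cyclic list vs of its 2n markings in the order
  in which the curve visits them: vs!(2i) are the markings of the first kind, vs!(2i+1) those of
  the second kind; integer pair (p,q) stands for the cell centre (p+1/2, q+1/2).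
  Segment vs!(2i) -> vs!(2i+1) is a-parallel (same row), vs!(2i+1) -> vs!(2i+2) is b-parallel.\<close>

definition immersed_grid :: "nat \<Rightarrow> (int \<times> int) list \<Rightarrow> bool" where
  "immersed_grid n vs \<longleftrightarrow>
     n \<ge> 1 \<and> length vs = 2*n \<and>
     (\<forall>k < 2*n. 0 \<le> fst (vs!k) \<and> fst (vs!k) < int n \<and> 0 \<le> snd (vs!k) \<and> snd (vs!k) < int n) \<and>
     (\<forall>r. 0 \<le> r \<and> r < int n \<longrightarrow>
        card {i. i < n \<and> snd (vs!(2*i)) = r} = 1 \<and> card {i. i < n \<and> snd (vs!(2*i+1)) = r} = 1 \<and>
        card {i. i < n \<and> fst (vs!(2*i)) = r} = 1 \<and> card {i. i < n \<and> fst (vs!(2*i+1)) = r} = 1) \<and>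
     (\<forall>i < n. snd (vs!(2*i)) = snd (vs!(2*i+1)) \<and> fst (vs!(2*i+1)) = fst (vs!((2*i+2) mod (2*n)))) \<and>
     (\<forall>k < 2*n. vs!k \<noteq> vs!((k+1) mod (2*n)))"

definition grid_pt :: "(int \<times> int) list \<Rightarrow> nat \<Rightarrow> real \<times> real" where
  "grid_pt vs k = (real_of_int (fst (vs!k)) + 1/2, real_of_int (snd (vs!k)) + 1/2)"

text \<open>Piecewise-linear 2pi-periodic parametrization: the k-th segment is traversed on
  [2 pi k/N, 2 pi (k+1)/N], N = length vs.\<close>
definition grid_param :: "(int \<times> int) list \<Rightarrow> real \<Rightarrow> real \<times> real" where
  "grid_param vs \<theta> =
     (let N = length vs; h = 2*pi / real N; j = \<lfloor>\<theta> / h\<rfloor>; \<tau> = \<theta> / h - real_of_int j;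
          k = nat (j mod int N)
      in (1 - \<tau>) *\<^sub>R grid_pt vs k + \<tau> *\<^sub>R grid_pt vs ((k+1) mod N))"

definition lagrangian_grid :: "nat \<Rightarrow> (int \<times> int) list \<Rightarrow> bool" where
  "lagrangian_grid n vs \<longleftrightarrow> immersed_grid n vs \<and> lag_cond1 (grid_param vs) \<and> lag_cond2 (grid_param vs)"

definition dir_in :: "(int \<times> int) list \<Rightarrow> nat \<Rightarrow> real \<times> real" where
  "dir_in vs k = grid_pt vs k - grid_pt vs ((k + length vs - 1) mod length vs)"

definition dir_out :: "(int \<times> int) list \<Rightarrow> nat \<Rightarrow> real \<times> real" where
  "dir_out vs k = grid_pt vs ((k+1) mod length vs) - grid_pt vs k"

definition cross2 :: "real \<times> real \<Rightarrow> real \<times> real \<Rightarrow> real" where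
  "cross2 u v = fst u * snd v - snd u * fst v"

definition ccw_corners :: "(int \<times> int) list \<Rightarrow> nat" where
  "ccw_corners vs = card {k. k < length vs \<and> cross2 (dir_in vs k) (dir_out vs k) > 0}"

definition cw_corners :: "(int \<times> int) list \<Rightarrow> nat" where
  "cw_corners vs = card {k. k < length vs \<and> cross2 (dir_in vs k) (dir_out vs k) < 0}"

definition grid_w :: "(int \<times> int) list \<Rightarrow> real" where
  "grid_w vs = (real (ccw_corners vs) - real (cw_corners vs)) / 4"

text \<open>Points (w,x,y,z) :: int^4; integer k stands for the coordinate k+1/2.
  Coordinate indices: 0 = w, 1 = x, 2 = y, 3 = z.  A hypercube diagram of size n is given by
  the cyclic list ps of its 4n markings in the order the curve visits them:
  ps!(4j) = W_j, ps!(4j+1) = X_j, ps!(4j+2) = Y_j, ps!(4j+3) = Z_j (label = index mod 4).\<close>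

definition coord :: "nat \<Rightarrow> int \<times> int \<times> int \<times> int \<Rightarrow> int" where
  "coord c p = (case p of (w, x, y, z) \<Rightarrow> [w, x, y, z] ! c)"

definition markings :: "(int \<times> int \<times> int \<times> int) list \<Rightarrow> (nat \<times> (int \<times> int \<times> int \<times> int)) set" where
  "markings ps = {(j mod 4, ps!j) | j. j < length ps}"

definition flat_marks :: "(int \<times> int \<times> int \<times> int) list \<Rightarrow> nat \<Rightarrow> int \<Rightarrow> nat \<Rightarrow> int
     \<Rightarrow> (nat \<times> (int \<times> int \<times> int \<times> int)) set" where
  "flat_marks ps c k d l = {(lab, p) \<in> markings ps. coord c p = k \<and> coord d p = l}"

definition differs_only_in :: "nat \<Rightarrow> int \<times> int \<times> int \<times> int \<Rightarrow> int \<times> int \<times> int \<times> int \<Rightarrow> bool" where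
  "differs_only_in d p q \<longleftrightarrow> coord d p \<noteq> coord d q \<and> (\<forall>c < 4. c \<noteq> d \<longrightarrow> coord c p = coord c q)"

definition marking_conditions :: "nat \<Rightarrow> (int \<times> int \<times> int \<times> int) list \<Rightarrow> bool" where
  "marking_conditions n ps \<longleftrightarrow>
     n \<ge> 1 \<and> length ps = 4*n \<and>
     (\<forall>j < 4*n. \<forall>c < 4. 0 \<le> coord c (ps!j) \<and> coord c (ps!j) < int n) \<and>
     \<comment> \<open>each cube contains exactly one marking of each label\<close>
     (\<forall>c < 4. \<forall>k. 0 \<le> k \<and> k < int n \<longrightarrow>
        (\<forall>lab < 4. card {p. (lab, p) \<in> markings ps \<and> coord c p = k} = 1)) \<and>
     \<comment> \<open>each cube contains exactly two flats containing exactly three markings\<close>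
     (\<forall>c < 4. \<forall>k. 0 \<le> k \<and> k < int n \<longrightarrow>
        card {(d, l). d < 4 \<and> d \<noteq> c \<and> 0 \<le> l \<and> l < int n \<and> card (flat_marks ps c k d l) = 3} = 2) \<and>
     \<comment> \<open>in each such flat: right angle, vertex label determined by the flat type\<close>
     (\<forall>c < 4. \<forall>d < 4. \<forall>k l. c \<noteq> d \<and> 0 \<le> k \<and> k < int n \<and> 0 \<le> l \<and> l < int n \<and>
        card (flat_marks ps c k d l) = 3 \<longrightarrow>
        (\<exists>lv v lq q lr r d1 d2.
           flat_marks ps c k d l = {(lv, v), (lq, q), (lr, r)} \<and>
           d1 \<noteq> d2 \<and> differs_only_in d1 v q \<and> differs_only_in d2 v r \<and>
           (let full = {0..<4} - {c, d} in
              (lv = 0 \<longleftrightarrow> full = {3, 0}) \<and> (lv = 1 \<longleftrightarrow> full = {0, 1}) \<and>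
              (lv = 2 \<longleftrightarrow> full = {1, 2}) \<and> (lv = 3 \<longleftrightarrow> full = {2, 3}))))"

text \<open>Joining: W->X is w-parallel, X->Y x-parallel, Y->Z y-parallel, Z->W z-parallel.\<close>
definition hyper_joined :: "nat \<Rightarrow> (int \<times> int \<times> int \<times> int) list \<Rightarrow> bool" where
  "hyper_joined n ps \<longleftrightarrow> (\<forall>j < 4*n. \<forall>c < 4. c \<noteq> j mod 4 \<longrightarrow> coord c (ps!((j+1) mod (4*n))) = coord c (ps!j))"

text \<open>Projection to the (w,y)-plane (a,b) = (w,y): first kind W_j, second kind X_j.\<close>
definition G_wy :: "nat \<Rightarrow> (int \<times> int \<times> int \<times> int) list \<Rightarrow> (int \<times> int) list" where
  "G_wy n ps = concat (map (\<lambda>j. [(coord 0 (ps!(4*j)), coord 2 (ps!(4*j))),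
                                  (coord 0 (ps!(4*j+1)), coord 2 (ps!(4*j+1)))]) [0..<n])"

text \<open>Projection to the (z,x)-plane (a,b) = (z,x): first kind Y_j (= Z_j), second kind W_(j+1) (= X_(j+1)).\<close>
definition G_zx :: "nat \<Rightarrow> (int \<times> int \<times> int \<times> int) list \<Rightarrow> (int \<times> int) list" where
  "G_zx n ps = concat (map (\<lambda>j. [(coord 3 (ps!(4*j+2)), coord 1 (ps!(4*j+2))),
                                  (coord 3 (ps!((4*j+4) mod (4*n))), coord 1 (ps!((4*j+4) mod (4*n))))]) [0..<n])"

definition lagrangian_hypercube :: "nat \<Rightarrow> (int \<times> int \<times> int \<times> int) list \<Rightarrow> bool" where
  "lagrangian_hypercube n ps \<longleftrightarrow>
     marking_conditions n ps \<and> hyper_joined n ps \<and>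
     lagrangian_grid n (G_zx n ps) \<and> lagrangian_grid n (G_wy n ps) \<and>
     (\<forall>(s0, s1) \<in> crossings (grid_param (G_zx n ps)). \<forall>(u0, u1) \<in> crossings (grid_param (G_wy n ps)).
        \<bar>dt_int (grid_param (G_zx n ps)) s0 s1\<bar> \<noteq> \<bar>dt_int (grid_param (G_wy n ps)) u0 u1\<bar>)"

definition smoothing :: "(int \<times> int) list \<Rightarrow> (real \<Rightarrow> real \<times> real) \<Rightarrow> bool" where
  "smoothing vs g \<longleftrightarrow>
     (let N = length vs in
      \<exists>\<epsilon> g'. 0 < \<epsilon> \<and> \<epsilon> < pi / real N \<and>
        (\<forall>\<theta>. g (\<theta> + 2*pi) = g \<theta>) \<and>
        (\<forall>\<theta>. (g has_vector_derivative g' \<theta>) (at \<theta>)) \<and> continuous_on UNIV g' \<and> (\<forall>\<theta>. g' \<theta> \<noteq> 0) \<and>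
        (\<forall>\<theta>. (\<forall>k < N. \<forall>m::int. \<bar>\<theta> - 2*pi*real k / real N - 2*pi*real_of_int m\<bar> \<ge> \<epsilon>)
              \<longrightarrow> g \<theta> = grid_param vs \<theta>) \<and>
        (\<forall>\<theta>. \<forall>k < N. \<forall>m::int. \<bar>\<theta> - 2*pi*real k / real N - 2*pi*real_of_int m\<bar> < \<epsilon> \<longrightarrow>
              (\<exists>\<alpha> \<beta>. \<alpha> \<ge> 0 \<and> \<beta> \<ge> 0 \<and> g' \<theta> = \<alpha> *\<^sub>R dir_in vs k + \<beta> *\<^sub>R dir_out vs k)) \<and>
        lag_cond1 g \<and> lag_cond2 g)"

definition torus_map :: "(real \<Rightarrow> real \<times> real) \<Rightarrow> (real \<Rightarrow> real \<times> real) \<Rightarrow> real \<times> real \<Rightarrow> real \<times> real \<times> real \<times> real" where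
  "torus_map gzx gwy p = (case p of (s, u) \<Rightarrow> (fst (gwy u), snd (gzx s), snd (gwy u), fst (gzx s)))"

text \<open>Complex structure compatible with omega = dw/\dy + dz/\dx: (w,x,y,z) |-> (w + i y, z + i x).
  Complex determinant of two vectors of C^2.\<close>
definition cdet :: "real \<times> real \<times> real \<times> real \<Rightarrow> real \<times> real \<times> real \<times> real \<Rightarrow> complex" where
  "cdet p q = (case p of (w1, x1, y1, z1) \<Rightarrow> case q of (w2, x2, y2, z2) \<Rightarrow>
      Complex w1 y1 * Complex z2 x2 - Complex z1 x1 * Complex w2 y2)"

text \<open>det^2 of a Lagrangian plane V: det(U)^2 for a unitary frame U of V, computed from any real
  basis (a,b) of V as det_C(a,b)^2/|det_C(a,b)|^2.\<close>
definition det_sq :: "(real \<times> real \<times> real \<times> real) set \<Rightarrow> complex" where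
  "det_sq V = (SOME d. \<exists>a b. a \<in> V \<and> b \<in> V \<and> span {a, b} = V \<and> cdet a b \<noteq> 0 \<and>
                           d = (cdet a b)\<^sup>2 / complex_of_real ((cmod (cdet a b))\<^sup>2))"

definition tangent_plane :: "(real \<times> real \<Rightarrow> real \<times> real \<times> real \<times> real) \<Rightarrow> real \<times> real \<Rightarrow> (real \<times> real \<times> real \<times> real) set" where
  "tangent_plane i p = range (frechet_derivative i (at p))"

text \<open>Loops in the torus (R/2piZ)^2, lifted to R^2; by embeddedness of the lift these are the
  loops in L.  Maslov index = degree of det^2 of the loop of tangent planes.\<close>
definition torus_loop :: "(real \<Rightarrow> real \<times> real) \<Rightarrow> bool" where
  "torus_loop q \<longleftrightarrow> continuous_on {0..1} q \<and>
     (\<exists>m1 m2 :: int. q 1 = q 0 + (2*pi*real_of_int m1, 2*pi*real_of_int m2))"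

definition maslov_index :: "(real \<Rightarrow> real \<times> real) \<Rightarrow> (real \<Rightarrow> real \<times> real) \<Rightarrow> (real \<Rightarrow> real \<times> real) \<Rightarrow> complex" where
  "maslov_index gzx gwy q = winding_number (\<lambda>t. det_sq (tangent_plane (torus_map gzx gwy) (q t))) 0"

definition maslov_indices :: "(real \<Rightarrow> real \<times> real) \<Rightarrow> (real \<Rightarrow> real \<times> real) \<Rightarrow> int set" where
  "maslov_indices gzx gwy = {m. \<exists>q. torus_loop q \<and> maslov_index gzx gwy q = of_int m}"

definition maslov_number :: "(real \<Rightarrow> real \<times> real) \<Rightarrow> (real \<Rightarrow> real \<times> real) \<Rightarrow> int" where
  "maslov_number gzx gwy =
     (if \<forall>m \<in> maslov_indices gzx gwy. m = 0 then 0
      else (LEAST m. m > 0 \<and> m \<in> maslov_indices gzx gwy))"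

end

theory Submission
  imports Defs
begin

lemma exp_const_imp_const:
  fixes F :: "real \<Rightarrow> complex"
  assumes S: "connected S" and c: "continuous_on S F" and e: "\<And>t. t \<in> S \<Longrightarrow> exp (F t) = exp (F t0)"
    and t0: "t0 \<in> S" and t: "t \<in> S"
  shows "F t = F t0"
proof -
  have "F constant_on S"
  proof (rule continuous_discrete_range_constant[OF S c])
    fix x assume x: "x \<in> S"
    show "\<exists>e>0. \<forall>y. y \<in> S \<and> F y \<noteq> F x \<longrightarrow> e \<le> norm (F y - F x)"
    proof (intro exI[of _ "2*pi"] conjI allI impI)
      fix y assume y: "y \<in> S \<and> F y \<noteq> F x"
      have "exp (F y - F x) = 1" using e[of y] e[OF x] y by (simp add: exp_diff)
      then obtain m :: int where re: "Re (F y - F x) = 0" and im: "Im (F y - F x) = of_int (2*m) * pi"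
        by (auto simp: exp_eq_1)
      have "m \<noteq> 0" using re im y by (metis complex_eqI diff_eq_eq mult_eq_0_iff of_int_0 zero_complex.sel(1) zero_complex.sel(2) diff_self mult_zero_right)
      hence "1 \<le> \<bar>real_of_int m\<bar>" by linarith
      hence "2*pi \<le> \<bar>Im (F y - F x)\<bar>" using im pi_gt_zero by (simp add: abs_mult)
      also have "\<dots> \<le> norm (F y - F x)" by (rule abs_Im_le_cmod)
      finally show "2*pi \<le> norm (F y - F x)" .
    qed (use pi_gt_zero in simp)
  qed
  thus ?thesis using t0 t by (auto simp: constant_on_def)
qed

lemma perp_zero:
  fixes D U V :: complex
  assumes U: "U \<noteq> 0" and V: "V \<noteq> 0" and p: "Re (U * cnj V) = 0"
    and d1: "Re (D * cnj U) = 0" and d2: "Re (D * cnj V) = 0"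
  shows "D = 0"
proof -
  obtain u1 u2 where Ud: "U = Complex u1 u2" by (cases U)
  obtain w1 w2 where Vd: "V = Complex w1 w2" by (cases V)
  obtain e1 e2 where Dd: "D = Complex e1 e2" by (cases D)
  have p': "u1 * w1 + u2 * w2 = 0" and a1: "e1 * u1 + e2 * u2 = 0" and a2: "e1 * w1 + e2 * w2 = 0"
    using p d1 d2 by (simp_all add: Ud Vd Dd)
  have un: "u1\<^sup>2 + u2\<^sup>2 > 0" using U Ud
    by (metis complex.sel(1) complex.sel(2) complex_eqI not_sum_power2_lt_zero sum_power2_eq_zero_iff zero_complex.sel(1) zero_complex.sel(2) linorder_neqE_linordered_idom)
  have vn: "w1\<^sup>2 + w2\<^sup>2 > 0" using V Vd
    by (metis complex.sel(1) complex.sel(2) complex_eqI not_sum_power2_lt_zero sum_power2_eq_zero_iff zero_complex.sel(1) zero_complex.sel(2) linorder_neqE_linordered_idom)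
  define c where "c = u1 * w2 - u2 * w1"
  have "c\<^sup>2 = (u1\<^sup>2 + u2\<^sup>2) * (w1\<^sup>2 + w2\<^sup>2) - (u1 * w1 + u2 * w2)\<^sup>2" unfolding c_def by algebra
  hence "c\<^sup>2 > 0" using p' un vn by simp
  hence c0: "c \<noteq> 0" by auto
  have "e1 * c = - u2 * (e1 * w1 + e2 * w2) + w2 * (e1 * u1 + e2 * u2)" unfolding c_def by algebra
  hence "e1 * c = 0" using a1 a2 by simp
  hence "e1 = 0" using c0 by simp
  have "e2 * c = u1 * (e1 * w1 + e2 * w2) - w1 * (e1 * u1 + e2 * u2)" unfolding c_def by algebra
  hence "e2 * c = 0" using a1 a2 by simp
  hence "e2 = 0" using c0 by simp
  show ?thesis using \<open>e1 = 0\<close> \<open>e2 = 0\<close> Dd by (simp add: complex_eq_iff)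
qed

lemma corner_turn:
  fixes L :: "real \<Rightarrow> complex" and U V :: complex
  assumes ab: "a \<le> b" and cL: "continuous_on {a..b} L"
    and U: "U \<noteq> 0" and V: "V \<noteq> 0" and perp: "Re (U * cnj V) = 0"
    and Da: "exp (L a) = of_real c1 * U" and c1: "c1 > 0"
    and Db: "exp (L b) = of_real c2 * V" and c2: "c2 > 0"
    and cone: "\<And>t. t \<in> {a..b} \<Longrightarrow> Re (exp (L t) * cnj U) \<ge> 0 \<and> Re (exp (L t) * cnj V) \<ge> 0"
  shows "Im (L b - L a) = (if Im (V * cnj U) > 0 then pi/2 else - pi/2)"
proof -
  define W where "W = cnj (U + V)"
  define E where "E t = exp (L t) * W" for t
  have Epos: "Re (E t) > 0" if t: "t \<in> {a..b}" for t
  proof -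
    let ?D = "exp (L t)"
    have "Re (E t) = Re (?D * cnj U) + Re (?D * cnj V)" by (simp add: E_def W_def algebra_simps)
    moreover have "\<not> (Re (?D * cnj U) = 0 \<and> Re (?D * cnj V) = 0)"
    proof
      assume h: "Re (?D * cnj U) = 0 \<and> Re (?D * cnj V) = 0"
      have "?D = 0" using perp_zero[OF U V perp] h by blast
      thus False by simp
    qed
    ultimately show ?thesis using cone[OF t] by linarith
  qed
  have Enz: "E t \<noteq> 0" if "t \<in> {a..b}" for t using Epos[OF that] by auto
  have W0: "W \<noteq> 0" using Enz[of a] ab by (auto simp: E_def)
  have cE: "continuous_on {a..b} E" unfolding E_def by (intro continuous_intros cL)
  have cLn: "continuous_on {a..b} (\<lambda>t. Ln (E t))"
    apply (rule continuous_on_Ln'[OF cE])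
    apply (simp add: complex_nonpos_Reals_iff)
    using Epos by (meson atLeastAtMost_iff not_le)
  define F where "F t = L t - Ln (E t)" for t
  have cF: "continuous_on {a..b} F" unfolding F_def by (intro continuous_intros cL cLn)
  have eF: "exp (F t) = 1 / W" if "t \<in> {a..b}" for t
    using Enz[OF that] W0 by (simp add: F_def exp_diff E_def)
  have "F b = F a"
    by (rule exp_const_imp_const[OF connected_Icc cF]) (use eF ab in auto)
  hence Lba: "L b - L a = Ln (E b) - Ln (E a)" by (simp add: F_def algebra_simps)
  have "\<bar>Im (Ln (E b))\<bar> < pi/2" by (rule Re_Ln_pos_lt_imp) (use Epos ab in auto)
  moreover have "\<bar>Im (Ln (E a))\<bar> < pi/2" by (rule Re_Ln_pos_lt_imp) (use Epos ab in auto)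
  ultimately have bound: "\<bar>Im (L b - L a)\<bar> < pi" using Lba by simp
  define z where "z = L b - L a"
  define s where "s = Im (V * cnj U)"
  have ReVU: "Re (V * cnj U) = 0" using perp by (simp add: algebra_simps)
  have VU: "V * cnj U = \<i> * of_real s" using ReVU by (simp add: s_def complex_eq_iff)
  have s0: "s \<noteq> 0" using VU U V by auto
  have "exp z = exp (L b) / exp (L a)" by (simp add: z_def exp_diff)
  also have "\<dots> = of_real c2 * V / (of_real c1 * U)" using Da Db by simp
  also have "\<dots> = of_real (c2 / (c1 * (cmod U)\<^sup>2)) * (V * cnj U)"
  proof -
    have nU: "(complex_of_real (cmod U))\<^sup>2 = U * cnj U" using complex_norm_square[of U] by simp
    have c1': "complex_of_real c1 \<noteq> 0" using c1 by simp
    have "of_real (c2 / (c1 * (cmod U)\<^sup>2)) * (V * cnj U) = of_real c2 * (V * cnj U) / (of_real c1 * (U * cnj U))"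
      by (simp add: nU[symmetric])
    also have "\<dots> = of_real c2 * V / (of_real c1 * U)" using U c1' by (simp add: field_simps)
    finally show ?thesis by simp
  qed
  finally have ez: "exp z = \<i> * of_real (c2 / (c1 * (cmod U)\<^sup>2) * s)" using VU by (simp add: algebra_simps)
  define r where "r = c2 / (c1 * (cmod U)\<^sup>2) * s"
  have dpos: "c2 / (c1 * (cmod U)\<^sup>2) > 0" using c1 c2 U by simp
  have rpos: "(r > 0) = (s > 0)" unfolding r_def using dpos by (metis mult_pos_pos zero_less_mult_pos)
  have r0: "r \<noteq> 0" unfolding r_def using dpos s0 by (metis mult_eq_0_iff order_less_irrefl)
  have ez': "exp z = \<i> * of_real r" using ez by (simp only: r_def)
  have "Re (exp z) = 0" using ez' by simp
  hence cz: "cos (Im z) = 0" by (simp add: Re_exp)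
  have "Im (exp z) = r" using ez' by simp
  hence sz: "exp (Re z) * sin (Im z) = r" by (simp add: Im_exp)
  obtain i :: int where io: "odd i" and iz: "Im z = of_int i * (pi/2)" using cz cos_zero_iff_int by blast
  have "\<bar>of_int i * (pi/2)\<bar> < pi" using bound iz z_def by simp
  hence "\<bar>real_of_int i\<bar> < 2" using pi_gt_zero by (simp add: abs_mult)
  hence "-2 < i \<and> i < 2" by (simp add: abs_less_iff)
  hence "i = -1 \<or> i = 0 \<or> i = 1" by presburger
  hence "i = 1 \<or> i = -1" using io by auto
  hence imz: "Im z = pi/2 \<or> Im z = - pi/2" using iz by auto
  show ?thesis
  proof (cases "s > 0")
    case True
    hence "r > 0" using rpos by simp
    hence "sin (Im z) > 0" using sz exp_gt_zero[of "Re z"] by (metis zero_less_mult_pos)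
    hence "Im z = pi/2" using imz by auto
    thus ?thesis using True by (simp add: z_def s_def)
  next
    case False
    hence "r < 0" using rpos r0 by linarith
    hence "sin (Im z) < 0" using sz by (metis exp_ge_zero mult_nonneg_nonneg not_less)
    hence "Im z = - pi/2" using imz by (metis sin_pi_half zero_less_one order_less_asym)
    thus ?thesis using False by (simp add: z_def s_def)
  qed
qed

definition cpx :: "real \<times> real \<Rightarrow> complex" where "cpx p = Complex (fst p) (snd p)"

lemma grid_param_seg:
  assumes N: "length vs = N" "N > 0" and j1: "of_int j * (2*pi/N) \<le> \<theta>" and j2: "\<theta> < of_int (j+1) * (2*pi/N)"
  shows "grid_param vs \<theta> = grid_pt vs (nat (j mod int N)) + (\<theta> / (2*pi/N) - of_int j) *\<^sub>R
            (grid_pt vs ((nat (j mod int N) + 1) mod N) - grid_pt vs (nat (j mod int N)))"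
proof -
  define h where "h = 2*pi/real N"
  have h: "h > 0" using N by (simp add: h_def)
  have "of_int j \<le> \<theta> / h" using j1 h by (simp add: h_def[symmetric] pos_le_divide_eq)
  moreover have "\<theta> / h < of_int j + 1" using j2 h by (simp add: h_def[symmetric] pos_divide_less_eq)
  ultimately have fl: "\<lfloor>\<theta> / (2 * pi / real N)\<rfloor> = j" by (simp add: floor_eq_iff h_def)
  have cvx: "(1 - t) *\<^sub>R P + t *\<^sub>R Q = P + t *\<^sub>R (Q - P)" for t and P Q :: "real \<times> real"
    by (simp add: algebra_simps)
  show ?thesis unfolding grid_param_def Let_def N(1) fl by (rule cvx)
qed

lemma affine_vd:
  fixes P Q :: "real \<times> real"
  assumes h: "h \<noteq> 0"
  shows "((\<lambda>\<theta>. P + (\<theta> / h - c) *\<^sub>R Q) has_vector_derivative (1/h) *\<^sub>R Q) (at x within S)"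
proof -
  have lin: "((\<lambda>\<theta>. \<theta> *\<^sub>R ((1/h) *\<^sub>R Q)) has_vector_derivative ((1/h) *\<^sub>R Q)) (at x within S)"
    unfolding has_vector_derivative_def by (rule bounded_linear_imp_has_derivative[OF bounded_linear_scaleR_left])
  have "((\<lambda>\<theta>. (P - c *\<^sub>R Q) + \<theta> *\<^sub>R ((1/h) *\<^sub>R Q)) has_vector_derivative 0 + ((1/h) *\<^sub>R Q)) (at x within S)"
    by (rule has_vector_derivative_add[OF has_vector_derivative_const lin])
  moreover have "(\<lambda>\<theta>. (P - c *\<^sub>R Q) + \<theta> *\<^sub>R ((1/h) *\<^sub>R Q)) = (\<lambda>\<theta>. P + (\<theta> / h - c) *\<^sub>R Q)"
    by (rule ext) (simp add: algebra_simps divide_inverse)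
  ultimately show ?thesis by simp
qed

lemma grid_pt_inj: "grid_pt vs a = grid_pt vs b \<Longrightarrow> vs!a = vs!b"
  by (simp add: grid_pt_def prod_eq_iff)

lemma ig_basic: "immersed_grid n vs \<Longrightarrow> length vs = 2*n \<and> n \<ge> 1"
  by (simp add: immersed_grid_def)

lemma ig_dir_out_nz:
  assumes "immersed_grid n vs" "k < length vs" shows "dir_out vs k \<noteq> 0"
proof
  assume "dir_out vs k = 0"
  hence "grid_pt vs ((k+1) mod length vs) = grid_pt vs k" by (simp add: dir_out_def)
  hence "vs!((k+1) mod length vs) = vs!k" by (rule grid_pt_inj)
  thus False using assms unfolding immersed_grid_def by auto
qed

lemma ig_even:
  assumes "immersed_grid n vs" "k < length vs" "even k" shows "snd (dir_out vs k) = 0"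
proof -
  obtain i where k: "k = 2*i" using assms(3) by blast
  have L: "length vs = 2*n" and i: "i < n" using assms k by (auto simp: immersed_grid_def)
  have "(k+1) mod length vs = 2*i+1" using L i k by simp
  moreover have "snd (vs!(2*i)) = snd (vs!(2*i+1))" using assms(1) i by (simp add: immersed_grid_def)
  ultimately show ?thesis using k by (simp add: dir_out_def grid_pt_def)
qed

lemma ig_odd:
  assumes "immersed_grid n vs" "k < length vs" "odd k" shows "fst (dir_out vs k) = 0"
proof -
  obtain i where k: "k = 2*i+1" using assms(3) oddE by blast
  have L: "length vs = 2*n" and i: "i < n" using assms k by (auto simp: immersed_grid_def)
  have "(k+1) mod length vs = (2*i+2) mod (2*n)" using L k by simp
  moreover have "fst (vs!(2*i+1)) = fst (vs!((2*i+2) mod (2*n)))" using assms(1) i by (simp add: immersed_grid_def)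
  ultimately show ?thesis using k by (simp add: dir_out_def grid_pt_def)
qed

lemma dir_in_eq:
  assumes "k < length vs" shows "dir_in vs k = dir_out vs ((k + length vs - 1) mod length vs)"
proof -
  from assms obtain M where M: "length vs = Suc M" by (cases "length vs") auto
  have "((k + length vs - 1) mod length vs + 1) mod length vs = k"
    using assms apply (simp add: M mod_Suc_eq) by (metis add_Suc_right mod_add_self2 mod_less)
  thus ?thesis by (simp add: dir_in_def dir_out_def)
qed

lemma pred_mod_nat:
  assumes "k < N" shows "nat ((int k - 1) mod int N) = (k + N - 1) mod N"
proof (cases "k = 0")
  case True
  have "(-1::int) mod int N = int N - 1" using assms by (simp add: zmod_minus1)
  thus ?thesis using True assms by (simp add: nat_diff_distrib)
next
  case False
  hence "(int k - 1) mod int N = int k - 1" using assms by simp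
  moreover have "(k + N - 1) mod N = k - 1" using False assms
    by (metis Nat.add_diff_assoc2 One_nat_def Suc_leI add.commute mod_add_self1 mod_less neq0_conv less_imp_diff_less)
  ultimately show ?thesis using False by simp
qed

lemma pred_parity:
  fixes k N :: nat
  assumes "even N" "k < N" shows "even ((k + N - 1) mod N) \<longleftrightarrow> odd k"
proof (cases "k = 0")
  case True
  have "(N - 1) mod N = N - 1" using assms(2) by (cases N) auto
  moreover have "odd (N - 1)" using assms True by (cases N) auto
  ultimately show ?thesis using True by simp
next
  case False
  hence "(k + N - 1) mod N = k - 1" using assms
    by (metis Nat.add_diff_assoc2 One_nat_def Suc_leI add.commute mod_add_self1 mod_less neq0_conv less_imp_diff_less)
  thus ?thesis using False by simp
qed

lemma ig_perp:
  assumes ig: "immersed_grid n vs" and k: "k < length vs"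
  shows "fst (dir_in vs k) * fst (dir_out vs k) + snd (dir_in vs k) * snd (dir_out vs k) = 0"
    and "dir_in vs k \<noteq> 0" and "dir_out vs k \<noteq> 0"
proof -
  let ?N = "length vs"
  have L: "?N = 2*n" "n \<ge> 1" using ig_basic[OF ig] by auto
  define p where "p = (k + ?N - 1) mod ?N"
  have p: "p < ?N" using L by (simp add: p_def)
  have din: "dir_in vs k = dir_out vs p" using dir_in_eq[OF k] by (simp add: p_def)
  have par: "even p \<longleftrightarrow> odd k" unfolding p_def by (rule pred_parity) (use L k in auto)
  show "fst (dir_in vs k) * fst (dir_out vs k) + snd (dir_in vs k) * snd (dir_out vs k) = 0"
  proof (cases "even k")
    case True
    thus ?thesis using ig_even[OF ig k True] ig_odd[OF ig p] par din by simp
  next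
    case False
    thus ?thesis using ig_odd[OF ig k] ig_even[OF ig p] par din by simp
  qed
  show "dir_in vs k \<noteq> 0" using din ig_dir_out_nz[OF ig p] by simp
  show "dir_out vs k \<noteq> 0" using ig_dir_out_nz[OF ig k] .
qed

lemma cpx_alt: "cpx p = of_real (fst p) + \<i> * of_real (snd p)"
  by (simp add: cpx_def complex_eq_iff)

lemma cpx_zero: "cpx p = 0 \<longleftrightarrow> p = 0"
  by (cases p) (simp add: cpx_def complex_eq_iff zero_prod_def)

lemma cpx_inner: "Re (cpx p * cnj (cpx q)) = fst p * fst q + snd p * snd q"
  by (simp add: cpx_def)

lemma cpx_cross: "Im (cpx q * cnj (cpx p)) = cross2 p q"
  by (simp add: cpx_def cross2_def algebra_simps)

lemma cpx_scaleR: "cpx (c *\<^sub>R p) = of_real c * cpx p"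
  by (simp add: cpx_def complex_eq_iff)

lemma cross_nz:
  fixes u v :: "real \<times> real"
  assumes "fst u * fst v + snd u * snd v = 0" "u \<noteq> 0" "v \<noteq> 0"
  shows "cross2 u v \<noteq> 0"
proof
  assume c: "cross2 u v = 0"
  have id: "(fst u * fst v + snd u * snd v)\<^sup>2 + (cross2 u v)\<^sup>2 = ((fst u)\<^sup>2 + (snd u)\<^sup>2) * ((fst v)\<^sup>2 + (snd v)\<^sup>2)"
    unfolding cross2_def by algebra
  have "(fst u)\<^sup>2 + (snd u)\<^sup>2 > 0" using assms(2)
    by (metis prod_eq_iff fst_zero snd_zero sum_power2_eq_zero_iff not_sum_power2_lt_zero linorder_neqE_linordered_idom)
  moreover have "(fst v)\<^sup>2 + (snd v)\<^sup>2 > 0" using assms(3)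
    by (metis prod_eq_iff fst_zero snd_zero sum_power2_eq_zero_iff not_sum_power2_lt_zero linorder_neqE_linordered_idom)
  ultimately have pos: "((fst u)\<^sup>2 + (snd u)\<^sup>2) * ((fst v)\<^sup>2 + (snd v)\<^sup>2) > 0" by simp
  have "(fst u * fst v + snd u * snd v)\<^sup>2 + (cross2 u v)\<^sup>2 = 0" using c assms(1) by simp
  thus False using id pos by linarith
qed

lemma int_dist:
  fixes h \<theta> :: real and j :: int
  assumes h: "h > 0" and t: "\<bar>\<theta> - real k * h\<bar> \<le> h/2" and j: "j \<noteq> int k"
  shows "\<bar>\<theta> - of_int j * h\<bar> \<ge> h/2"
proof -
  have "\<bar>of_int j - real k\<bar> \<ge> 1" using j by linarith
  hence "1 * h \<le> \<bar>of_int j - real k\<bar> * h" using h by (intro mult_right_mono) auto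
  moreover have "\<bar>of_int j * h - real k * h\<bar> = \<bar>of_int j - real k\<bar> * h"
    using h by (simp add: left_diff_distrib[symmetric] abs_mult)
  ultimately have "\<bar>of_int j * h - real k * h\<bar> \<ge> h" by simp
  thus ?thesis using t by linarith
qed

lemma far_lemma:
  fixes h \<theta> \<epsilon> :: real
  assumes N: "N > 0" and hdef: "h = 2*pi / real N" and j: "\<And>j::int. \<bar>\<theta> - of_int j * h\<bar> \<ge> \<epsilon>"
  shows "\<forall>k<N. \<forall>m::int. \<bar>\<theta> - 2*pi*real k / real N - 2*pi*real_of_int m\<bar> \<ge> \<epsilon>"
proof (intro allI impI)
  fix k m assume "k < N"
  have "2*pi*real k / real N + 2*pi*real_of_int m = of_int (int k + m * int N) * h"
    using N by (simp add: hdef field_simps)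
  thus "\<bar>\<theta> - 2*pi*real k / real N - 2*pi*real_of_int m\<bar> \<ge> \<epsilon>" using j[of "int k + m * int N"]
    by (simp add: algebra_simps)
qed

lemma vd_shift:
  assumes "(g has_vector_derivative d) (at (\<theta> + c))"
  shows "((\<lambda>t. g (t + c)) has_vector_derivative d) (at \<theta>)"
proof -
  have "((\<lambda>t. t + c) has_real_derivative 1) (at \<theta>)" by (auto intro!: derivative_eq_intros)
  hence "((\<lambda>t. t + c) has_vector_derivative 1) (at \<theta>)" by (simp add: has_real_derivative_iff_has_vector_derivative)
  from vector_diff_chain_at[OF this assms] show ?thesis by (simp add: o_def)
qed

lemma smoothing_rot:
  assumes ig: "immersed_grid n vs" and sm: "smoothing vs g"
  obtains g' L r where "\<And>\<theta>. (g has_vector_derivative g' \<theta>) (at \<theta>)" "continuous_on UNIV L"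
     "\<And>\<theta>. cpx (g' \<theta>) = exp (L \<theta>)" "real_of_int r = grid_w vs"
     "\<And>\<theta>. L (\<theta> + 2*pi) = L \<theta> + 2 * pi * \<i> * of_int r"
proof -
  define N where "N = length vs"
  have NN: "N = 2*n" "n \<ge> 1" using ig_basic[OF ig] by (auto simp: N_def)
  hence Npos: "N > 0" by simp
  define h where "h = 2*pi / real N"
  have hpos: "h > 0" using Npos by (simp add: h_def)
  have Nh: "real N * h = 2*pi" using Npos by (simp add: h_def)
  from sm[unfolded smoothing_def Let_def, folded N_def]
  obtain \<epsilon> g' where e0: "0 < \<epsilon>" and eh: "\<epsilon> < pi / real N" and per: "\<forall>\<theta>. g (\<theta> + 2*pi) = g \<theta>"
    and gd: "\<forall>\<theta>. (g has_vector_derivative g' \<theta>) (at \<theta>)" and cg': "continuous_on UNIV g'"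
    and nz: "\<forall>\<theta>. g' \<theta> \<noteq> 0"
    and far: "\<forall>\<theta>. (\<forall>k<N. \<forall>m::int. \<bar>\<theta> - 2*pi*real k / real N - 2*pi*real_of_int m\<bar> \<ge> \<epsilon>) \<longrightarrow> g \<theta> = grid_param vs \<theta>"
    and win: "\<forall>\<theta>. \<forall>k<N. \<forall>m::int. \<bar>\<theta> - 2*pi*real k / real N - 2*pi*real_of_int m\<bar> < \<epsilon> \<longrightarrow>
              (\<exists>\<alpha> \<beta>. \<alpha> \<ge> 0 \<and> \<beta> \<ge> 0 \<and> g' \<theta> = \<alpha> *\<^sub>R dir_in vs k + \<beta> *\<^sub>R dir_out vs k)"
    by blast
  have eh2: "\<epsilon> < h/2" using eh by (simp add: h_def)
  have ccpx0: "continuous_on UNIV (\<lambda>\<theta>. of_real (fst (g' \<theta>)) + \<i> * of_real (snd (g' \<theta>)) :: complex)"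
    by (rule continuous_on_add[OF continuous_on_of_real[OF continuous_on_fst[OF cg']]
          continuous_on_mult[OF continuous_on_const continuous_on_of_real[OF continuous_on_snd[OF cg']]]])
  have ccpx: "continuous_on UNIV (\<lambda>\<theta>. cpx (g' \<theta>))" unfolding cpx_alt by (rule ccpx0)
  have cnz: "cpx (g' \<theta>) \<noteq> 0" for \<theta> using nz by (simp add: cpx_zero)
  have "\<exists>L. continuous_on UNIV L \<and> (\<forall>x. cpx (g' x) = exp (L x))"
  proof (rule continuous_logarithm_on_contractible[OF ccpx contractible_UNIV])
    show "\<And>z. z \<in> UNIV \<Longrightarrow> cpx (g' z) \<noteq> 0" using cnz by simp
    fix L assume "continuous_on UNIV L" "\<And>x. x \<in> UNIV \<Longrightarrow> cpx (g' x) = exp (L x)"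
    thus "\<exists>L. continuous_on UNIV L \<and> (\<forall>x. cpx (g' x) = exp (L x))" by auto
  qed
  then obtain L where cL: "continuous_on UNIV L" and eL0: "\<forall>x. cpx (g' x) = exp (L x)" by blast
  have eL: "cpx (g' \<theta>) = exp (L \<theta>)" for \<theta> using eL0 by blast
  have gper: "g' (\<theta> + 2*pi) = g' \<theta>" for \<theta>
  proof -
    have "((\<lambda>t. g (t + 2*pi)) has_vector_derivative g' (\<theta> + 2*pi)) (at \<theta>)"
      by (rule vd_shift) (use gd in blast)
    moreover have "(\<lambda>t. g (t + 2*pi)) = g" using per by auto
    ultimately have "(g has_vector_derivative g' (\<theta> + 2*pi)) (at \<theta>)" by simp
    thus ?thesis using gd[rule_format, of \<theta>] by (rule vector_derivative_unique_at)
  qed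
  have cLs: "continuous_on UNIV (\<lambda>\<theta>. L (\<theta> + 2*pi) - L \<theta>)"
  proof -
    have "continuous_on UNIV (\<lambda>\<theta>. L (\<theta> + 2*pi))"
      by (rule continuous_on_compose2[OF cL]) (auto intro!: continuous_intros)
    thus ?thesis by (intro continuous_intros cL)
  qed
  have eper: "exp (L (t + 2*pi) - L t) = 1" for t
  proof -
    have e1: "exp (L (t + 2*pi)) = exp (L t)" using eL[of t] eL[of "t + 2*pi"] gper[of t] by metis
    show ?thesis by (simp add: exp_diff e1)
  qed
  define c0 where "c0 = L (-h/2 + 2*pi) - L (-h/2)"
  have Lper: "L (\<theta> + 2*pi) = L \<theta> + c0" for \<theta>
  proof -
    have "L (\<theta> + 2*pi) - L \<theta> = L (-h/2 + 2*pi) - L (-h/2)"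
    proof (rule exp_const_imp_const[OF connected_UNIV cLs, of "-h/2" \<theta>])
      fix t
      show "exp (L (t + 2*pi) - L t) = exp (L (-h/2 + 2*pi) - L (-h/2))"
        using eper[of t] eper[of "-h/2"] by simp
    qed auto
    thus ?thesis by (simp add: c0_def algebra_simps)
  qed
  have corner: "Im (L ((real k + 1/2) * h) - L ((real k - 1/2) * h)) =
      (if cross2 (dir_in vs k) (dir_out vs k) > 0 then pi/2 else - pi/2)" if k: "k < N" for k
  proof -
    define u where "u = dir_in vs k"
    define v where "v = dir_out vs k"
    define K where "K = real k * h"
    define a where "a = (real k - 1/2) * h"
    define b where "b = (real k + 1/2) * h"
    have kN: "k < length vs" using k by (simp add: N_def)
    have perp: "fst u * fst v + snd u * snd v = 0" and u0: "u \<noteq> 0" and v0: "v \<noteq> 0"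
      using ig_perp[OF ig kN] by (auto simp: u_def v_def)
    have aK: "a = K - h/2" and bK: "b = K + h/2" by (simp_all add: a_def b_def K_def algebra_simps)
    have farpt: "g \<theta> = grid_param vs \<theta>" if t1: "\<bar>\<theta> - K\<bar> \<ge> \<epsilon>" and t2: "\<bar>\<theta> - K\<bar> \<le> h/2" for \<theta>
    proof -
      have "\<bar>\<theta> - of_int j * h\<bar> \<ge> \<epsilon>" for j :: int
      proof (cases "j = int k")
        case True thus ?thesis using t1 by (simp add: K_def)
      next
        case False thus ?thesis using int_dist[OF hpos _ False, of \<theta>] t2 eh2 by (simp add: K_def)
      qed
      hence "\<forall>k<N. \<forall>m::int. \<bar>\<theta> - 2*pi*real k / real N - 2*pi*real_of_int m\<bar> \<ge> \<epsilon>"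
        by (rule far_lemma[OF Npos h_def])
      thus ?thesis using far by blast
    qed
    have right: "g' \<theta> = (1/h) *\<^sub>R v" if t: "\<theta> \<in> {K+\<epsilon>..b}" for \<theta>
    proof -
      define A where "A t = grid_pt vs k + (t / h - real k) *\<^sub>R v" for t
      have gA: "g t = A t" if "t \<in> {K+\<epsilon>..b}" for t
      proof -
        have "g t = grid_param vs t" using that eh2 e0 by (intro farpt) (auto simp: bK abs_if)
        also have "\<dots> = A t"
        proof -
          have t1: "real k * h \<le> t" "t < (real k + 1) * h"
            using that e0 eh2 hpos by (auto simp: bK K_def algebra_simps)
          hence "of_int (int k) * (2*pi/N) \<le> t" "t < of_int (int k + 1) * (2*pi/N)"
            unfolding h_def by simp_all
          note gp = grid_param_seg[OF N_def[symmetric] Npos this]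
          have hh: "t / (2*pi/real N) = t / h" by (simp add: h_def)
          show ?thesis unfolding gp hh using k by (simp add: A_def v_def dir_out_def N_def)
        qed
        finally show ?thesis .
      qed
      have lt: "K + \<epsilon> < b" using eh2 by (simp add: bK)
      have d1: "(g has_vector_derivative g' \<theta>) (at \<theta> within cbox (K+\<epsilon>) b)"
        using gd has_vector_derivative_at_within by blast
      have d2: "(g has_vector_derivative (1/h) *\<^sub>R v) (at \<theta> within cbox (K+\<epsilon>) b)"
        by (rule has_vector_derivative_transform[of \<theta> _ _ A])
           (use t gA hpos in \<open>auto simp: A_def[abs_def] intro!: affine_vd\<close>)
      show ?thesis using vector_derivative_unique_within_closed_interval[OF lt _ d1 d2] t by simp
    qed
    have left: "g' \<theta> = (1/h) *\<^sub>R u" if t: "\<theta> \<in> {a..K-\<epsilon>}" for \<theta>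
    proof -
      define p where "p = (k + N - 1) mod N"
      have pN: "nat ((int k - 1) mod int N) = p" using pred_mod_nat[OF k] by (simp add: p_def)
      have up: "u = grid_pt vs ((p + 1) mod N) - grid_pt vs p"
        using dir_in_eq[OF kN] by (simp add: u_def p_def N_def dir_out_def)
      define A where "A t = grid_pt vs p + (t / h - (real k - 1)) *\<^sub>R u" for t
      have gA: "g t = A t" if "t \<in> {a..K-\<epsilon>}" for t
      proof -
        have "g t = grid_param vs t" using that eh2 e0 by (intro farpt) (auto simp: aK abs_if)
        also have "\<dots> = A t"
        proof -
          have t1: "(real k - 1) * h \<le> t" "t < real k * h"
            using that e0 eh2 hpos by (auto simp: aK K_def algebra_simps)
          hence "of_int (int k - 1) * (2*pi/N) \<le> t" "t < of_int (int k - 1 + 1) * (2*pi/N)"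
            unfolding h_def by simp_all
          note gp = grid_param_seg[OF N_def[symmetric] Npos this]
          have hh: "t / (2*pi/real N) = t / h" by (simp add: h_def)
          show ?thesis unfolding gp hh pN using k by (simp add: A_def up)
        qed
        finally show ?thesis .
      qed
      have lt: "a < K - \<epsilon>" using eh2 by (simp add: aK)
      have d1: "(g has_vector_derivative g' \<theta>) (at \<theta> within cbox a (K-\<epsilon>))"
        using gd has_vector_derivative_at_within by blast
      have d2: "(g has_vector_derivative (1/h) *\<^sub>R u) (at \<theta> within cbox a (K-\<epsilon>))"
        by (rule has_vector_derivative_transform[of \<theta> _ _ A])
           (use t gA hpos in \<open>auto simp: A_def[abs_def] intro!: affine_vd\<close>)
      show ?thesis using vector_derivative_unique_within_closed_interval[OF lt _ d1 d2] t by simp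
    qed
    have cone: "fst (g' \<theta>) * fst u + snd (g' \<theta>) * snd u \<ge> 0 \<and> fst (g' \<theta>) * fst v + snd (g' \<theta>) * snd v \<ge> 0"
      if t: "\<theta> \<in> {a..b}" for \<theta>
    proof (cases "\<bar>\<theta> - K\<bar> < \<epsilon>")
      case True
      have kk: "K = 2*pi*real k / real N" by (simp add: K_def h_def algebra_simps)
      have "\<bar>\<theta> - 2*pi*real k / real N - 2*pi*real_of_int (0::int)\<bar> < \<epsilon>"
        using True unfolding kk by simp
      then obtain \<alpha> \<beta> where ab: "\<alpha> \<ge> 0" "\<beta> \<ge> 0" "g' \<theta> = \<alpha> *\<^sub>R u + \<beta> *\<^sub>R v"
        using win k unfolding u_def v_def by blast
      have "fst (g' \<theta>) * fst u + snd (g' \<theta>) * snd u = \<alpha> * ((fst u)\<^sup>2 + (snd u)\<^sup>2) + \<beta> * (fst u * fst v + snd u * snd v)"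
        using ab by (simp add: algebra_simps power2_eq_square)
      moreover have "fst (g' \<theta>) * fst v + snd (g' \<theta>) * snd v = \<beta> * ((fst v)\<^sup>2 + (snd v)\<^sup>2) + \<alpha> * (fst u * fst v + snd u * snd v)"
        using ab by (simp add: algebra_simps power2_eq_square)
      ultimately show ?thesis using ab perp by simp
    next
      case False
      show ?thesis
      proof (cases "\<theta> \<ge> K")
        case True
        hence "\<theta> \<in> {K+\<epsilon>..b}" using False t by auto
        hence g: "g' \<theta> = (1/h) *\<^sub>R v" by (rule right)
        have "fst (g' \<theta>) * fst u + snd (g' \<theta>) * snd u = (1/h) * (fst u * fst v + snd u * snd v)"
          using g by (simp add: algebra_simps)
        moreover have "fst (g' \<theta>) * fst v + snd (g' \<theta>) * snd v = (1/h) * ((fst v)\<^sup>2 + (snd v)\<^sup>2)"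
          using g by (simp add: algebra_simps power2_eq_square)
        ultimately show ?thesis using perp hpos by simp
      next
        case False2: False
        hence "\<theta> \<in> {a..K-\<epsilon>}" using False t by auto
        hence g: "g' \<theta> = (1/h) *\<^sub>R u" by (rule left)
        have "fst (g' \<theta>) * fst v + snd (g' \<theta>) * snd v = (1/h) * (fst u * fst v + snd u * snd v)"
          using g by (simp add: algebra_simps)
        moreover have "fst (g' \<theta>) * fst u + snd (g' \<theta>) * snd u = (1/h) * ((fst u)\<^sup>2 + (snd u)\<^sup>2)"
          using g by (simp add: algebra_simps power2_eq_square)
        ultimately show ?thesis using perp hpos by simp
      qed
    qed
    have ab: "a \<le> b" using hpos by (simp add: aK bK)
    have ga: "g' a = (1/h) *\<^sub>R u" by (rule left) (use eh2 in \<open>auto simp: aK\<close>)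
    have gb: "g' b = (1/h) *\<^sub>R v" by (rule right) (use eh2 in \<open>auto simp: bK\<close>)
    have "Im (L b - L a) = (if Im (cpx v * cnj (cpx u)) > 0 then pi/2 else - pi/2)"
    proof (rule corner_turn[OF ab continuous_on_subset[OF cL subset_UNIV]])
      show "cpx u \<noteq> 0" "cpx v \<noteq> 0" using u0 v0 by (simp_all add: cpx_zero)
      show "Re (cpx u * cnj (cpx v)) = 0" unfolding cpx_inner by (rule perp)
      show "exp (L a) = complex_of_real (1/h) * cpx u" using eL[of a] ga by (simp add: cpx_scaleR)
      show "exp (L b) = complex_of_real (1/h) * cpx v" using eL[of b] gb by (simp add: cpx_scaleR)
      show "1/h > 0" "1/h > 0" using hpos by simp_all
      fix t assume tt: "t \<in> {a..b}"
      show "0 \<le> Re (exp (L t) * cnj (cpx u)) \<and> 0 \<le> Re (exp (L t) * cnj (cpx v))"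
        unfolding eL[of t, symmetric] cpx_inner using cone[OF tt] by simp
    qed
    thus ?thesis unfolding cpx_cross a_def b_def u_def v_def .
  qed
  define f where "f i = L ((real i - 1/2) * h)" for i :: nat
  have "(\<Sum>k<N. f (Suc k) - f k) = f N - f 0" by (rule sum_lessThan_telescope)
  moreover have "f N = f 0 + c0"
  proof -
    have "(real N - 1/2) * h = -h/2 + 2*pi" using Nh by (simp add: algebra_simps)
    thus ?thesis using Lper[of "-h/2"] by (simp add: f_def)
  qed
  ultimately have c0sum: "c0 = (\<Sum>k<N. f (Suc k) - f k)" by simp
  define cr where "cr k = cross2 (dir_in vs k) (dir_out vs k)" for k
  have crnz: "cr k \<noteq> 0" if "k < N" for k
  proof -
    have kN: "k < length vs" using that by (simp add: N_def)
    show ?thesis unfolding cr_def by (rule cross_nz) (use ig_perp[OF ig kN] in auto)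
  qed
  have "Im c0 = (\<Sum>k<N. Im (f (Suc k) - f k))" using c0sum by (simp add: Im_sum)
  also have "\<dots> = (\<Sum>k<N. if cr k > 0 then pi/2 else - pi/2)"
  proof (rule sum.cong)
    fix k assume "k \<in> {..<N}"
    hence "k < N" by simp
    have e: "real (Suc k) - 1/2 = real k + 1/2" by simp
    show "Im (f (Suc k) - f k) = (if cr k > 0 then pi/2 else - pi/2)"
      unfolding f_def cr_def e by (rule corner[OF \<open>k < N\<close>])
  qed simp
  also have "\<dots> = (\<Sum>k\<in>{..<N} \<inter> {k. cr k > 0}. pi/2) + (\<Sum>k\<in>{..<N} \<inter> - {k. cr k > 0}. - pi/2)"
    by (rule sum.If_cases) simp
  also have "{..<N} \<inter> {k. cr k > 0} = {k. k < length vs \<and> cross2 (dir_in vs k) (dir_out vs k) > 0}"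
    by (auto simp: N_def cr_def)
  also have "{..<N} \<inter> - {k. cr k > 0} = {k. k < length vs \<and> cross2 (dir_in vs k) (dir_out vs k) < 0}"
  proof -
    have "{..<N} \<inter> - {k. cr k > 0} = {k. k < N \<and> cr k < 0}"
    proof (intro set_eqI iffI)
      fix x assume "x \<in> {..<N} \<inter> - {k. cr k > 0}"
      hence "x < N" "\<not> cr x > 0" by auto
      thus "x \<in> {k. k < N \<and> cr k < 0}" using crnz[of x] by simp
    qed auto
    thus ?thesis by (simp add: N_def cr_def)
  qed
  finally have "Im c0 = real (ccw_corners vs) * (pi/2) - real (cw_corners vs) * (pi/2)"
    by (simp add: ccw_corners_def cw_corners_def)
  hence imc: "Im c0 = 2 * pi * grid_w vs" by (simp add: grid_w_def algebra_simps)
  have "exp c0 = 1"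
  proof -
    show ?thesis using eper[of "-h/2"] unfolding c0_def .
  qed
  then obtain r :: int where rec: "Re c0 = 0" and imr: "Im c0 = of_int (2*r) * pi" by (auto simp: exp_eq_1)
  have rw: "real_of_int r = grid_w vs" using imc imr pi_gt_zero by simp
  have "c0 = 2 * pi * \<i> * of_int r" using rec imr by (simp add: complex_eq_iff)
  thus ?thesis using that[of g' L r] gd cL eL rw Lper by auto
qed

lemma comp_snd_vd:
  assumes "(g has_vector_derivative d) (at (snd p))"
  shows "((\<lambda>q. g (snd q)) has_derivative (\<lambda>q. snd q *\<^sub>R d)) (at p)"
  using diff_chain_at[OF has_derivative_snd[OF has_derivative_ident, of "at p"], of g "\<lambda>t. t *\<^sub>R d"] assms
  unfolding has_vector_derivative_def by (simp add: o_def)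

lemma comp_fst_vd:
  assumes "(g has_vector_derivative d) (at (fst p))"
  shows "((\<lambda>q. g (fst q)) has_derivative (\<lambda>q. fst q *\<^sub>R d)) (at p)"
  using diff_chain_at[OF has_derivative_fst[OF has_derivative_ident, of "at p"], of g "\<lambda>t. t *\<^sub>R d"] assms
  unfolding has_vector_derivative_def by (simp add: o_def)

lemma torus_deriv:
  assumes d1: "(g1 has_vector_derivative d1) (at s)" and d2: "(g2 has_vector_derivative d2) (at u)"
  shows "(torus_map g1 g2 has_derivative
           (\<lambda>q. (snd q * fst d2, fst q * snd d1, snd q * snd d2, fst q * fst d1))) (at (s,u))"
proof -
  have A: "((\<lambda>q. g2 (snd q)) has_derivative (\<lambda>q. snd q *\<^sub>R d2)) (at (s,u))"
    by (rule comp_snd_vd) (use d2 in simp)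
  have B: "((\<lambda>q. g1 (fst q)) has_derivative (\<lambda>q. fst q *\<^sub>R d1)) (at (s,u))"
    by (rule comp_fst_vd) (use d1 in simp)
  have H: "((\<lambda>q. (fst (g2 (snd q)), snd (g1 (fst q)), snd (g2 (snd q)), fst (g1 (fst q)))) has_derivative
           (\<lambda>q. (fst (snd q *\<^sub>R d2), snd (fst q *\<^sub>R d1), snd (snd q *\<^sub>R d2), fst (fst q *\<^sub>R d1)))) (at (s,u))"
    by (intro has_derivative_Pair has_derivative_fst[OF A] has_derivative_snd[OF A]
              has_derivative_fst[OF B] has_derivative_snd[OF B])
  have e1: "torus_map g1 g2 = (\<lambda>q. (fst (g2 (snd q)), snd (g1 (fst q)), snd (g2 (snd q)), fst (g1 (fst q))))"
    by (rule ext) (simp add: torus_map_def split: prod.splits)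
  have e2: "(\<lambda>q. (fst (snd q *\<^sub>R d2), snd (fst q *\<^sub>R d1), snd (snd q *\<^sub>R d2), fst (fst q *\<^sub>R d1))) =
            (\<lambda>q. (snd q * fst d2, fst q * snd d1, snd q * snd d2, fst q * fst d1))"
    by (rule ext) simp
  show ?thesis using H unfolding e1 e2 .
qed

lemma cdet_bilin:
  fixes a b :: "real \<times> real \<times> real \<times> real"
  shows "cdet (p *\<^sub>R a + q *\<^sub>R b) (r *\<^sub>R a + t *\<^sub>R b) = of_real (p * t - q * r) * cdet a b"
proof -
  obtain a1 a2 a3 a4 where a: "a = (a1, a2, a3, a4)" by (cases a) auto
  obtain b1 b2 b3 b4 where b: "b = (b1, b2, b3, b4)" by (cases b) auto
  show ?thesis unfolding a b by (simp add: cdet_def complex_eq_iff algebra_simps)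
qed

lemma det_sq_eq:
  fixes a b :: "real \<times> real \<times> real \<times> real"
  assumes V: "V = range (\<lambda>q. fst q *\<^sub>R a + snd q *\<^sub>R b)" and nz: "cdet a b \<noteq> 0"
  shows "det_sq V = (cdet a b)\<^sup>2 / of_real ((cmod (cdet a b))\<^sup>2)"
proof -
  let ?P = "\<lambda>d. \<exists>a' b'. a' \<in> V \<and> b' \<in> V \<and> span {a', b'} = V \<and> cdet a' b' \<noteq> 0 \<and>
                    d = (cdet a' b')\<^sup>2 / complex_of_real ((cmod (cdet a' b'))\<^sup>2)"
  have aV: "a \<in> V" unfolding V by (rule range_eqI[of _ _ "(1,0)"]) simp
  have bV: "b \<in> V" unfolding V by (rule range_eqI[of _ _ "(0,1)"]) simp
  have sp: "span {a, b} = V"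
  proof (intro equalityI subsetI)
    fix x assume "x \<in> span {a, b}"
    then obtain k where "x - k *\<^sub>R a \<in> span {b}" by (auto simp: span_insert)
    then obtain l where "x - k *\<^sub>R a = l *\<^sub>R b" by (auto simp: span_singleton)
    hence "x = fst (k,l) *\<^sub>R a + snd (k,l) *\<^sub>R b" by (simp add: algebra_simps)
    thus "x \<in> V" unfolding V by blast
  next
    fix x assume "x \<in> V"
    then obtain q where x: "x = fst q *\<^sub>R a + snd q *\<^sub>R b" unfolding V by blast
    have "x - fst q *\<^sub>R a \<in> span {b}" unfolding x by (auto simp: span_singleton)
    thus "x \<in> span {a, b}" by (auto simp: span_insert)
  qed
  have ex: "?P ((cdet a b)\<^sup>2 / of_real ((cmod (cdet a b))\<^sup>2))" using aV bV sp nz by blast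
  have uniq: "d = (cdet a b)\<^sup>2 / of_real ((cmod (cdet a b))\<^sup>2)" if "?P d" for d
  proof -
    from that obtain a' b' where a': "a' \<in> V" and b': "b' \<in> V" and nz': "cdet a' b' \<noteq> 0"
      and d: "d = (cdet a' b')\<^sup>2 / complex_of_real ((cmod (cdet a' b'))\<^sup>2)" by blast
    from a' obtain p q where pq: "a' = p *\<^sub>R a + q *\<^sub>R b" unfolding V by auto
    from b' obtain r t where rt: "b' = r *\<^sub>R a + t *\<^sub>R b" unfolding V by auto
    define c where "c = p * t - q * r"
    have cd: "cdet a' b' = of_real c * cdet a b" unfolding pq rt c_def by (rule cdet_bilin)
    hence c0: "c \<noteq> 0" using nz' by auto
    have "d = (of_real c * cdet a b)\<^sup>2 / complex_of_real ((cmod (of_real c * cdet a b))\<^sup>2)" using d cd by simp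
    also have "\<dots> = (of_real c)\<^sup>2 * (cdet a b)\<^sup>2 / ((of_real c)\<^sup>2 * complex_of_real ((cmod (cdet a b))\<^sup>2))"
      by (simp add: norm_mult power_mult_distrib)
    also have "\<dots> = (cdet a b)\<^sup>2 / of_real ((cmod (cdet a b))\<^sup>2)" using c0 by simp
    finally show ?thesis .
  qed
  show ?thesis unfolding det_sq_def using someI[of ?P, OF ex] uniq by blast
qed

lemma expsq: "(exp w)\<^sup>2 / complex_of_real ((cmod (exp w))\<^sup>2) = exp (2 * \<i> * of_real (Im w))"
proof -
  have a: "(exp w)\<^sup>2 = exp (2 * w)"
    by (simp only: power2_eq_square exp_add[symmetric] mult_2)
  have b0: "(cmod (exp w))\<^sup>2 = exp (2 * Re w)"
    by (simp only: norm_exp_eq_Re power2_eq_square exp_add[symmetric] mult_2)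
  have b: "complex_of_real ((cmod (exp w))\<^sup>2) = exp (of_real (2 * Re w))"
    unfolding b0 by (rule exp_of_real[symmetric])
  have c: "2 * w - of_real (2 * Re w) = 2 * \<i> * of_real (Im w)" by (simp add: complex_eq_iff)
  show ?thesis unfolding a b exp_diff[symmetric] c ..
qed

lemma per_nat:
  fixes L :: "real \<Rightarrow> complex"
  assumes p: "\<And>\<theta>. L (\<theta> + 2*pi) = L \<theta> + c"
  shows "L (\<theta> + 2*pi*real n) = L \<theta> + of_nat n * c"
proof (induction n)
  case 0 thus ?case by simp
next
  case (Suc n)
  have e: "\<theta> + 2*pi*real (Suc n) = (\<theta> + 2*pi*real n) + 2*pi" by (simp add: algebra_simps)
  have "L (\<theta> + 2*pi*real (Suc n)) = L (\<theta> + 2*pi*real n) + c" unfolding e by (rule p)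
  also have "\<dots> = L \<theta> + of_nat n * c + c" using Suc by simp
  finally show ?case by (simp add: algebra_simps)
qed

lemma per_int:
  fixes L :: "real \<Rightarrow> complex"
  assumes p: "\<And>\<theta>. L (\<theta> + 2*pi) = L \<theta> + c"
  shows "L (\<theta> + 2*pi*real_of_int m) = L \<theta> + of_int m * c"
proof (cases "m \<ge> 0")
  case True
  define n where "n = nat m"
  have m: "m = int n" using True by (simp add: n_def)
  show ?thesis using per_nat[of L c \<theta> n, OF p] m by simp
next
  case False
  define n where "n = nat (- m)"
  have m: "m = - int n" using False by (simp add: n_def)
  have "L ((\<theta> - 2*pi*real n) + 2*pi*real n) = L (\<theta> - 2*pi*real n) + of_nat n * c"
    by (rule per_nat[of L c, OF p])
  hence "L (\<theta> - 2*pi*real n) = L \<theta> - of_nat n * c" by (simp add: algebra_simps)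
  thus ?thesis using m by (simp add: algebra_simps)
qed

lemma det_sq_point:
  assumes d1: "\<And>\<theta>. (g1 has_vector_derivative g1' \<theta>) (at \<theta>)" and e1: "\<And>\<theta>. cpx (g1' \<theta>) = exp (L1 \<theta>)"
    and d2: "\<And>\<theta>. (g2 has_vector_derivative g2' \<theta>) (at \<theta>)" and e2: "\<And>\<theta>. cpx (g2' \<theta>) = exp (L2 \<theta>)"
  shows "det_sq (tangent_plane (torus_map g1 g2) p) = exp (2 * \<i> * of_real (Im (L1 (fst p)) + Im (L2 (snd p))))"
proof -
  obtain s u where p: "p = (s, u)" by (cases p)
  define a where "a = (0::real, snd (g1' s), 0::real, fst (g1' s))"
  define b where "b = (fst (g2' u), 0::real, snd (g2' u), 0::real)"
  have fd: "frechet_derivative (torus_map g1 g2) (at (s,u)) =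
      (\<lambda>q. (snd q * fst (g2' u), fst q * snd (g1' s), snd q * snd (g2' u), fst q * fst (g1' s)))"
    by (rule frechet_derivative_at[OF torus_deriv[OF d1 d2], symmetric])
  have lam: "(\<lambda>q. (snd q * fst (g2' u), fst q * snd (g1' s), snd q * snd (g2' u), fst q * fst (g1' s))) =
      (\<lambda>q. fst q *\<^sub>R a + snd q *\<^sub>R b)"
    by (rule ext) (simp add: a_def b_def)
  have tp: "tangent_plane (torus_map g1 g2) p = range (\<lambda>q. fst q *\<^sub>R a + snd q *\<^sub>R b)"
    unfolding tangent_plane_def p fd lam by (rule refl)
  have cd: "cdet a b = - (cpx (g1' s) * cpx (g2' u))"
    by (simp add: cdet_def a_def b_def cpx_def complex_eq_iff algebra_simps)
  have cd2: "cdet a b = - exp (L1 s + L2 u)" unfolding cd e1 e2 by (simp add: exp_add)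
  have nz: "cdet a b \<noteq> 0" unfolding cd2 by simp
  have "det_sq (tangent_plane (torus_map g1 g2) p) = (cdet a b)\<^sup>2 / of_real ((cmod (cdet a b))\<^sup>2)"
    by (rule det_sq_eq[OF tp nz])
  also have "\<dots> = (exp (L1 s + L2 u))\<^sup>2 / of_real ((cmod (exp (L1 s + L2 u)))\<^sup>2)"
    unfolding cd2 by (simp only: power2_minus norm_minus_cancel)
  also have "\<dots> = exp (2 * \<i> * of_real (Im (L1 s + L2 u)))" by (rule expsq)
  finally show ?thesis by (simp add: p)
qed

lemma maslov_indices_eq:
  assumes d1: "\<And>\<theta>. (g1 has_vector_derivative g1' \<theta>) (at \<theta>)" and e1: "\<And>\<theta>. cpx (g1' \<theta>) = exp (L1 \<theta>)"
    and d2: "\<And>\<theta>. (g2 has_vector_derivative g2' \<theta>) (at \<theta>)" and e2: "\<And>\<theta>. cpx (g2' \<theta>) = exp (L2 \<theta>)"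
    and c1: "continuous_on UNIV L1" and c2: "continuous_on UNIV L2"
    and p1: "\<And>\<theta>. L1 (\<theta> + 2*pi) = L1 \<theta> + 2 * pi * \<i> * of_int r1"
    and p2: "\<And>\<theta>. L2 (\<theta> + 2*pi) = L2 \<theta> + 2 * pi * \<i> * of_int r2"
  shows "maslov_indices g1 g2 = {m. \<exists>x y. m = 2 * (x * r1 + y * r2)}"
proof -
  have idx: "maslov_index g1 g2 q = of_int (2 * (m1 * r1 + m2 * r2))"
    if cq: "continuous_on {0..1} q" and q1: "q 1 = q 0 + (2*pi*real_of_int m1, 2*pi*real_of_int m2)" for q m1 m2
  proof -
    define P where "P t = 2 * \<i> * of_real (Im (L1 (fst (q t))) + Im (L2 (snd (q t))))" for t
    have eq: "(\<lambda>t. det_sq (tangent_plane (torus_map g1 g2) (q t))) = exp \<circ> P"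
      by (rule ext) (simp add: P_def det_sq_point[OF d1 e1 d2 e2])
    have cc1: "continuous_on {0..1} (\<lambda>t. L1 (fst (q t)))"
      by (rule continuous_on_compose2[OF c1]) (auto intro: continuous_on_fst cq)
    have cc2: "continuous_on {0..1} (\<lambda>t. L2 (snd (q t)))"
      by (rule continuous_on_compose2[OF c2]) (auto intro: continuous_on_snd cq)
    have pP: "path P" unfolding path_def P_def
      by (intro continuous_on_mult continuous_on_const continuous_on_of_real continuous_on_add continuous_on_Im cc1 cc2)
    have f1: "fst (q 1) = fst (q 0) + 2*pi*real_of_int m1" and f2: "snd (q 1) = snd (q 0) + 2*pi*real_of_int m2"
      using q1 by simp_all
    have i1: "Im (L1 (fst (q 1))) = Im (L1 (fst (q 0))) + 2*pi*real_of_int (m1 * r1)"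
      unfolding f1 per_int[where L=L1 and c="2 * pi * \<i> * of_int r1", OF p1] by simp
    have i2: "Im (L2 (snd (q 1))) = Im (L2 (snd (q 0))) + 2*pi*real_of_int (m2 * r2)"
      unfolding f2 per_int[where L=L2 and c="2 * pi * \<i> * of_int r2", OF p2] by simp
    have "maslov_index g1 g2 q = winding_number (exp \<circ> P) 0" by (simp add: maslov_index_def eq)
    also have "\<dots> = (P 1 - P 0) / (2 * of_real pi * \<i>)"
      using winding_number_compose_exp[OF pP] by (simp add: pathfinish_def pathstart_def)
    also have "P 1 - P 0 = 2 * \<i> * of_real (2*pi*real_of_int (m1 * r1) + 2*pi*real_of_int (m2 * r2))"
      unfolding P_def i1 i2 by (simp add: algebra_simps)
    also have "(2 * \<i> * of_real (2*pi*real_of_int (m1 * r1) + 2*pi*real_of_int (m2 * r2))) / (2 * of_real pi * \<i>)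
        = of_int (2 * (m1 * r1 + m2 * r2))"
      by (simp add: field_simps)
    finally show ?thesis .
  qed
  show ?thesis
  proof (intro set_eqI iffI)
    fix m assume "m \<in> maslov_indices g1 g2"
    then obtain q where tl: "torus_loop q" and mi: "maslov_index g1 g2 q = of_int m"
      by (auto simp: maslov_indices_def)
    from tl obtain m1 m2 where cq: "continuous_on {0..1} q"
      and q1: "q 1 = q 0 + (2*pi*real_of_int m1, 2*pi*real_of_int m2)" by (auto simp: torus_loop_def)
    have "(of_int m :: complex) = of_int (2 * (m1 * r1 + m2 * r2))" using idx[OF cq q1] mi by simp
    hence "m = 2 * (m1 * r1 + m2 * r2)" by (simp only: of_int_eq_iff)
    thus "m \<in> {m. \<exists>x y. m = 2 * (x * r1 + y * r2)}" by blast
  next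
    fix m assume "m \<in> {m. \<exists>x y. m = 2 * (x * r1 + y * r2)}"
    then obtain x y where m: "m = 2 * (x * r1 + y * r2)" by blast
    define q where "q t = (2*pi*real_of_int x * t, 2*pi*real_of_int y * t)" for t :: real
    have cq: "continuous_on {0..1} q" unfolding q_def by (intro continuous_intros)
    have q1: "q 1 = q 0 + (2*pi*real_of_int x, 2*pi*real_of_int y)" by (simp add: q_def)
    have "torus_loop q" unfolding torus_loop_def using cq q1 by blast
    moreover have "maslov_index g1 g2 q = of_int m" using idx[OF cq q1] m by simp
    ultimately show "m \<in> maslov_indices g1 g2" by (auto simp: maslov_indices_def)
  qed
qed

lemma least_gcd:
  fixes a b :: int
  assumes M: "M = {m. \<exists>x y. m = 2 * (x * a + y * b)}"
  shows "(if \<forall>m \<in> M. m = 0 then 0 else (LEAST m. m > 0 \<and> m \<in> M)) = 2 * gcd a b"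
proof (cases "a = 0 \<and> b = 0")
  case True
  thus ?thesis using M by auto
next
  case False
  have gpos: "gcd a b > 0" using False by simp
  have nz0: "\<not> (\<forall>m \<in> M. m = 0)"
  proof
    assume h: "\<forall>m \<in> M. m = 0"
    have "2 * (1 * a + 0 * b) \<in> M" "2 * (0 * a + 1 * b) \<in> M" unfolding M by blast+
    thus False using h False by auto
  qed
  have le: "(LEAST m. m > 0 \<and> m \<in> M) = 2 * gcd a b"
  proof (rule Least_equality)
    obtain u v where uv: "u * a + v * b = gcd a b" using bezout_int by blast
    have "2 * gcd a b = 2 * (u * a + v * b)" using uv by simp
    hence "2 * gcd a b \<in> M" unfolding M by blast
    thus "2 * gcd a b > 0 \<and> 2 * gcd a b \<in> M" using gpos by simp
  next
    fix m assume m: "m > 0 \<and> m \<in> M"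
    then obtain x y where mx: "m = 2 * (x * a + y * b)" unfolding M by blast
    have "gcd a b dvd x * a + y * b" by simp
    hence "2 * gcd a b dvd m" unfolding mx by simp
    thus "2 * gcd a b \<le> m" using m by (intro zdvd_imp_le) auto
  qed
  show ?thesis by (subst if_not_P[OF nz0]) (rule le)
qed

theorem corollary1p2:
  fixes n :: nat and ps :: "(int \<times> int \<times> int \<times> int) list"
    and gzx gwy :: "real \<Rightarrow> real \<times> real"
  assumes "lagrangian_hypercube n ps"
    and "smoothing (G_zx n ps) gzx"
    and "smoothing (G_wy n ps) gwy"
  shows "\<exists>a b :: int. real_of_int a = grid_w (G_zx n ps) \<and> real_of_int b = grid_w (G_wy n ps) \<and>
           maslov_number gzx gwy = 2 * gcd a b"
proof -
  have ig1: "immersed_grid n (G_zx n ps)" and ig2: "immersed_grid n (G_wy n ps)"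
    using assms(1) by (auto simp: lagrangian_hypercube_def lagrangian_grid_def)
  obtain g1' L1 r1 where d1: "\<And>\<theta>. (gzx has_vector_derivative g1' \<theta>) (at \<theta>)" and c1: "continuous_on UNIV L1"
    and e1: "\<And>\<theta>. cpx (g1' \<theta>) = exp (L1 \<theta>)" and w1: "real_of_int r1 = grid_w (G_zx n ps)"
    and p1: "\<And>\<theta>. L1 (\<theta> + 2*pi) = L1 \<theta> + 2 * pi * \<i> * of_int r1"
    using smoothing_rot[OF ig1 assms(2)] by blast
  obtain g2' L2 r2 where d2: "\<And>\<theta>. (gwy has_vector_derivative g2' \<theta>) (at \<theta>)" and c2: "continuous_on UNIV L2"
    and e2: "\<And>\<theta>. cpx (g2' \<theta>) = exp (L2 \<theta>)" and w2: "real_of_int r2 = grid_w (G_wy n ps)"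
    and p2: "\<And>\<theta>. L2 (\<theta> + 2*pi) = L2 \<theta> + 2 * pi * \<i> * of_int r2"
    using smoothing_rot[OF ig2 assms(3)] by blast
  have "maslov_number gzx gwy = 2 * gcd r1 r2"
    unfolding maslov_number_def by (rule least_gcd[OF maslov_indices_eq[OF d1 e1 d2 e2 c1 c2 p1 p2]])
  thus ?thesis using w1 w2 by blast
qed

end
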